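(* Let $c<1$ be any constant, $\ell\le n^c$, and suppose $d$ is unknown to the algorithm. Any non-adaptive randomized group testing algorithm that, with probability at least $3/4$, detects $\ell$ defective items must make at least $\Omega\left(\frac{\ell\log^2 n}{\log\ell+\log\log n}\right)$ tests.
   Context: Group testing: items $X=[n]$, unknown defective set $I\subseteq X$ with $d=|I|$. A test $Q\subseteq X$ has answer $1$ if $Q\cap I\neq\emptyset$ and $0$ otherwise. A non-adaptive (randomized) algorithm chooses all its tests before seeing any answer, then computes its output from the answers. "Detects $\ell$ defective items" means it outputs $L\subseteq I$ with $|L|=\ell$. "$d$ is unknown" means the algorithm receives no information about $|I|$ and must succeed (with the stated probability) for every defective set $I$ with $|I|\ge\ell$. Logarithms are base 2. *)

theory Defs
  imports "HOL-Probability.Probability"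
begin

text \<open>Items are X = {0..<n}; the defective set I is a subset of X.
  A test Q answers True iff Q meets I.\<close>

definition test_answers :: "nat set list \<Rightarrow> nat set \<Rightarrow> bool list" where
  "test_answers T I = map (\<lambda>Q. Q \<inter> I \<noteq> {}) T"

definition detects :: "nat \<Rightarrow> nat set \<Rightarrow> nat set \<Rightarrow> bool" where
  "detects l I L \<longleftrightarrow> L \<subseteq> I \<and> card L = l"

text \<open>A non-adaptive randomized algorithm is a probability distribution over pairs
  (T, D): a list T of tests (chosen before any answer is seen) and a decoder D that
  maps the vector of answers to the output.  It uses at most m tests, and, with d unknown,
  it must detect l defectives with probability at least 3/4 for every defective set
  I \<subseteq> X with |I| \<ge> l.\<close>
definition randomized_nonadaptive_detects ::
  "nat \<Rightarrow> nat \<Rightarrow> nat \<Rightarrow> (nat set list \<times> (bool list \<Rightarrow> nat set)) pmf \<Rightarrow> bool" where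
  "randomized_nonadaptive_detects n l m A \<longleftrightarrow>
     (\<forall>(T, D) \<in> set_pmf A. length T \<le> m \<and> (\<forall>Q \<in> set T. Q \<subseteq> {..<n})) \<and>
     (\<forall>I. I \<subseteq> {..<n} \<and> card I \<ge> l \<longrightarrow>
        measure_pmf.prob A {(T, D). detects l I (D (test_answers T I))} \<ge> 3/4)"

end

theory Submission
  imports Defs
begin


lemma binom_ratio1:
  assumes "l \<le> d" "d \<le> n"
  shows "real ((n-l) choose (d-l)) * real n ^ l \<le> real (n choose d) * real d ^ l"
  using assms(1)
proof (induction l)
  case 0 then show ?case by simp
next
  case (Suc l)
  have ld: "l < d" using Suc.prems by simp
  have key: "(d-l) * ((n-l) choose (d-l)) = (n-l) * ((n-l-1) choose (d-l-1))"
    using times_binomial_minus1_eq[of "d-l" "n-l"] ld by simp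
  have e1: "n - Suc l = n - l - 1" "d - Suc l = d - l - 1" by auto
  have IH: "real ((n-l) choose (d-l)) * real n ^ l \<le> real (n choose d) * real d ^ l"
    using Suc by simp
  have pos: "real (n - l) > 0" using ld assms(2) by simp
  have ineq: "real (d-l) * real n \<le> real d * real (n-l)"
  proof -
    have "d * l \<le> l * n" using ld assms(2) by (simp add: mult.commute)
    hence "real d * real l \<le> real l * real n" by (metis of_nat_le_iff of_nat_mult)
    thus ?thesis using ld assms(2) by (simp add: of_nat_diff algebra_simps)
  qed
  have keyR: "real (n-l) * real ((n - Suc l) choose (d - Suc l)) = real (d-l) * real ((n-l) choose (d-l))"
    unfolding e1 using arg_cong[OF key, of real] by (simp only: of_nat_mult)
  have "real ((n - Suc l) choose (d - Suc l)) * real n ^ Suc l * real (n-l)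
      = (real (n-l) * real ((n - Suc l) choose (d - Suc l))) * real n ^ l * real n"
    by (simp add: algebra_simps)
  also have "\<dots> = real ((n-l) choose (d-l)) * real n ^ l * (real (d-l) * real n)"
    unfolding keyR by (simp add: algebra_simps)
  also have "\<dots> \<le> real (n choose d) * real d ^ l * (real d * real (n-l))"
    using IH ineq by (rule mult_mono) auto
  also have "\<dots> = real (n choose d) * real d ^ Suc l * real (n-l)" by simp
  finally show ?case using pos by simp
qed

lemma absorb2: "(N - k) * (N choose k) = Suc k * (N choose Suc k)"
  using binomial_absorb_comp[of N k] binomial_absorption[of k N] by simp

lemma binom_ratio2:
  assumes "q \<le> n"
  shows "real ((n-q) choose d) * real n ^ d \<le> real (n choose d) * real (n-q) ^ d"
proof (induction d)
  case 0 then show ?case by simp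
next
  case (Suc d)
  define N where "N = n - q"
  have IH: "real (N choose d) * real n ^ d \<le> real (n choose d) * real N ^ d"
    using Suc by (simp add: N_def)
  have k1: "real (Suc d) * real (N choose Suc d) = real (N - d) * real (N choose d)"
    using arg_cong[OF absorb2[of N d], of real] by (simp only: of_nat_mult)
  have k2: "real (Suc d) * real (n choose Suc d) = real (n - d) * real (n choose d)"
    using arg_cong[OF absorb2[of n d], of real] by (simp only: of_nat_mult)
  have Nn: "N \<le> n" by (simp add: N_def)
  have ineq: "real (N - d) * real n \<le> real (n - d) * real N"
  proof (cases "d \<le> N")
    case True
    have "N * d \<le> d * n" using Nn by (simp add: mult.commute)
    hence "real N * real d \<le> real d * real n" by (metis of_nat_le_iff of_nat_mult)
    then show ?thesis using True Nn by (simp add: of_nat_diff algebra_simps)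
  next
    case False then show ?thesis by simp
  qed
  have "real (Suc d) * (real (N choose Suc d) * real n ^ Suc d)
      = (real (Suc d) * real (N choose Suc d)) * real n ^ d * real n"
    by (simp only: power_Suc mult_ac)
  also have "\<dots> = (real (N choose d) * real n ^ d) * (real (N - d) * real n)"
    unfolding k1 by (simp only: mult_ac)
  also have "\<dots> \<le> (real (n choose d) * real N ^ d) * (real (n - d) * real N)"
    using IH ineq by (rule mult_mono) auto
  also have "\<dots> = (real (n - d) * real (n choose d)) * real N ^ d * real N"
    by (simp only: mult_ac)
  also have "\<dots> = real (Suc d) * (real (n choose Suc d) * real N ^ Suc d)"
    unfolding k2[symmetric] by (simp only: power_Suc mult_ac)
  finally show ?case unfolding N_def[symmetric]
    by (simp only: mult_le_cancel_left_pos of_nat_0_less_iff zero_less_Suc)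
qed

lemma pow_decay:
  fixes x :: real
  assumes "0 \<le> x" "x \<le> 1"
  shows "(1-x)^d * (1 + real d * x) \<le> 1"
proof -
  have "1 + real d * x \<le> (1+x)^d" using Bernoulli_inequality[of x d] assms by simp
  hence "(1-x)^d * (1 + real d * x) \<le> (1-x)^d * (1+x)^d"
    using assms by (intro mult_left_mono) auto
  also have "\<dots> = (1 - x^2)^d" by (simp add: power_mult_distrib[symmetric] power2_eq_square algebra_simps)
  also have "\<dots> \<le> 1" using assms by (intro power_le_one) (auto simp: power_le_one)
  finally show ?thesis .
qed



definition subs :: "nat \<Rightarrow> nat \<Rightarrow> nat set set" where
  "subs n d = {I. I \<subseteq> {..<n} \<and> card I = d}"

lemma subs_finite[simp]: "finite (subs n d)"
  unfolding subs_def by (rule finite_subset[of _ "Pow {..<n}"]) auto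

lemma card_subs: "card (subs n d) = n choose d"
  unfolding subs_def using n_subsets[of "{..<n}" d] by simp

lemma card_sup_le:
  assumes "L \<subseteq> {..<n}" "card L = l" "l \<le> d"
  shows "card {I \<in> subs n d. L \<subseteq> I} \<le> (n-l) choose (d-l)"
proof -
  have fL: "finite L" using assms(1) finite_subset by blast
  have "{I \<in> subs n d. L \<subseteq> I} \<subseteq> (\<lambda>J. J \<union> L) ` {J. J \<subseteq> {..<n} - L \<and> card J = d - l}"
  proof
    fix I assume I: "I \<in> {I \<in> subs n d. L \<subseteq> I}"
    hence "I \<subseteq> {..<n}" "card I = d" "L \<subseteq> I" by (auto simp: subs_def)
    moreover have "finite I" using \<open>I \<subseteq> {..<n}\<close> finite_subset by blast
    ultimately have "card (I - L) = d - l" using assms(2) card_Diff_subset[of L I] finite_subset[of L I] by simp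
    moreover have "I = (I - L) \<union> L" using \<open>L \<subseteq> I\<close> by blast
    ultimately show "I \<in> (\<lambda>J. J \<union> L) ` {J. J \<subseteq> {..<n} - L \<and> card J = d - l}"
      using \<open>I \<subseteq> {..<n}\<close> by blast
  qed
  hence "card {I \<in> subs n d. L \<subseteq> I} \<le> card ((\<lambda>J. J \<union> L) ` {J. J \<subseteq> {..<n} - L \<and> card J = d - l})"
    by (intro card_mono finite_imageI) (auto intro: finite_subset[of _ "Pow {..<n}"])
  also have "\<dots> \<le> card {J. J \<subseteq> {..<n} - L \<and> card J = d - l}" by (rule card_image_le) (auto intro: finite_subset[of _ "Pow {..<n}"])
  also have "\<dots> = card ({..<n} - L) choose (d - l)" by (rule n_subsets) simp
  also have "card ({..<n} - L) = n - l" using assms fL by (simp add: card_Diff_subset)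
  finally show ?thesis .
qed

lemma frac_sup:
  assumes "card L = l" "d \<le> n"
  shows "real (card {I \<in> subs n d. L \<subseteq> I}) * real n ^ l \<le> real (n choose d) * real d ^ l"
proof (cases "L \<subseteq> {..<n} \<and> l \<le> d")
  case True
  have "real (card {I \<in> subs n d. L \<subseteq> I}) * real n ^ l \<le> real ((n-l) choose (d-l)) * real n ^ l"
    using card_sup_le[of L n l d] True assms by (intro mult_right_mono) auto
  also have "\<dots> \<le> real (n choose d) * real d ^ l" using binom_ratio1 True assms by auto
  finally show ?thesis .
next
  case False
  have "{I \<in> subs n d. L \<subseteq> I} = {}"
  proof (rule ccontr)
    assume "{I \<in> subs n d. L \<subseteq> I} \<noteq> {}"
    then obtain I where I: "I \<subseteq> {..<n}" "card I = d" "L \<subseteq> I" by (auto simp: subs_def)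
    have "finite I" using I(1) finite_subset by blast
    hence "l \<le> d" using card_mono[OF _ I(3)] I assms by simp
    thus False using False I by auto
  qed
  hence c0: "card {I \<in> subs n d. L \<subseteq> I} = 0" by (simp only: card.empty)
  show ?thesis by (subst c0) simp
qed

lemma frac_small:
  assumes "1 \<le> d" "d \<le> n" "R * card (Q \<inter> {..<n}) * d \<le> n"
  shows "real R * real (card {I \<in> subs n d. Q \<inter> I \<noteq> {}}) \<le> real (n choose d)"
proof -
  define Q' where "Q' = Q \<inter> {..<n}"
  define K where "K = card {I \<in> subs n d. Q \<inter> I \<noteq> {}}"
  define f where "f = (\<lambda>x. card {I \<in> subs n d. {x} \<subseteq> I})"
  have fQ: "finite Q'" by (simp add: Q'_def)
  have sub: "{I \<in> subs n d. Q \<inter> I \<noteq> {}} \<subseteq> (\<Union>x\<in>Q'. {I \<in> subs n d. {x} \<subseteq> I})"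
    by (auto simp: subs_def Q'_def)
  have "K \<le> card (\<Union>x\<in>Q'. {I \<in> subs n d. {x} \<subseteq> I})"
    unfolding K_def by (rule card_mono[OF _ sub]) (simp add: fQ)
  also have "\<dots> \<le> (\<Sum>x\<in>Q'. f x)" unfolding f_def by (rule card_UN_le[OF fQ])
  finally have c1: "K \<le> (\<Sum>x\<in>Q'. f x)" .
  have c2: "f x * n \<le> (n choose d) * d" for x
  proof -
    have "real (f x) * real n \<le> real (n choose d) * real d"
      using frac_sup[of "{x}" 1 d n] assms unfolding f_def by simp
    thus ?thesis by (metis of_nat_le_iff of_nat_mult)
  qed
  have "K * n \<le> (\<Sum>x\<in>Q'. f x) * n" using c1 by (rule mult_right_mono) simp
  also have "\<dots> = (\<Sum>x\<in>Q'. f x * n)" by (rule sum_distrib_right)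
  also have "\<dots> \<le> (\<Sum>x\<in>Q'. (n choose d) * d)" by (rule sum_mono) (rule c2)
  also have "\<dots> = card Q' * ((n choose d) * d)" by simp
  finally have c3: "K * n \<le> card Q' * ((n choose d) * d)" .
  have "R * K * n \<le> R * (card Q' * ((n choose d) * d))" using c3 by (simp only: mult.assoc mult_le_mono2)
  also have "\<dots> = (R * card Q' * d) * (n choose d)" by (simp only: mult_ac)
  also have "\<dots> \<le> n * (n choose d)" using assms(3) unfolding Q'_def by (rule mult_right_mono) simp
  finally have "R * K * n \<le> (n choose d) * n" by (simp only: mult_ac)
  moreover have "0 < n" using assms by simp
  ultimately have "R * K \<le> n choose d" by simp
  hence "real (R * K) \<le> real (n choose d)" by (simp only: of_nat_le_iff)
  thus ?thesis unfolding K_def by simp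
qed

lemma frac_big:
  assumes "1 \<le> d" "d \<le> n" "n * R \<le> card (Q \<inter> {..<n}) * d" "0 < R"
  shows "real R * real (card {I \<in> subs n d. Q \<inter> I = {}}) \<le> real (n choose d)"
proof -
  define q where "q = card (Q \<inter> {..<n})"
  have qn: "q \<le> n" unfolding q_def by (metis card_lessThan card_mono finite_lessThan inf_le2)
  have eq: "{I \<in> subs n d. Q \<inter> I = {}} = {I. I \<subseteq> {..<n} - (Q \<inter> {..<n}) \<and> card I = d}"
    by (auto simp: subs_def)
  have "card {I \<in> subs n d. Q \<inter> I = {}} = card ({..<n} - (Q \<inter> {..<n})) choose d"
    unfolding eq by (rule n_subsets) simp
  also have "card ({..<n} - (Q \<inter> {..<n})) = n - q" unfolding q_def by (simp add: card_Diff_subset)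
  finally have ceq: "card {I \<in> subs n d. Q \<inter> I = {}} = (n - q) choose d" .
  have np: "real n > 0" using assms by simp
  define x where "x = real q / real n"
  have x01: "0 \<le> x" "x \<le> 1" using qn np by (auto simp: x_def)
  have pd: "(1-x)^d * (1 + real d * x) \<le> 1" by (rule pow_decay[OF x01])
  have dx: "real R \<le> real d * x"
  proof -
    have "real n * real R \<le> real q * real d" using assms(3) unfolding q_def by (metis of_nat_le_iff of_nat_mult)
    thus ?thesis using np by (simp add: x_def field_simps)
  qed
  have p1: "real R * (1-x)^d \<le> 1"
  proof -
    have "real R * (1-x)^d \<le> (1 + real d * x) * (1-x)^d" using dx x01 by (intro mult_right_mono) auto
    thus ?thesis using pd by (simp add: mult.commute)
  qed
  have r2: "real ((n-q) choose d) * real n ^ d \<le> real (n choose d) * real (n-q) ^ d" by (rule binom_ratio2[OF qn])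
  have "real (n-q) = real n * (1 - x)" using qn np by (simp add: x_def of_nat_diff field_simps)
  hence "real ((n-q) choose d) * real n ^ d \<le> real (n choose d) * (1-x)^d * real n ^ d"
    using r2 by (simp add: power_mult_distrib mult_ac)
  hence r3: "real ((n-q) choose d) \<le> real (n choose d) * (1-x)^d" using np by simp
  have "real R * real ((n-q) choose d) \<le> real R * (real (n choose d) * (1-x)^d)"
    using r3 by (intro mult_left_mono) auto
  also have "\<dots> = real (n choose d) * (real R * (1-x)^d)" by simp
  also have "\<dots> \<le> real (n choose d)" using p1 by (intro mult_left_le) auto
  finally show ?thesis using ceq by simp
qed



definition qj :: "nat \<Rightarrow> nat set list \<Rightarrow> nat \<Rightarrow> nat" where
  "qj n T j = card (T!j \<inter> {..<n})"

definition win :: "nat \<Rightarrow> nat \<Rightarrow> nat \<Rightarrow> nat set list \<Rightarrow> nat set" where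
  "win n R d T = {j. j < length T \<and> n < R * qj n T j * d \<and> qj n T j * d < n * R}"

lemma card_V_le:
  fixes b :: "nat \<Rightarrow> bool"
  assumes "W \<subseteq> {..<k}"
  shows "finite {a::bool list. length a = k \<and> (\<forall>j<k. j \<notin> W \<longrightarrow> a!j = b j)}"
    "card {a::bool list. length a = k \<and> (\<forall>j<k. j \<notin> W \<longrightarrow> a!j = b j)} \<le> 2 ^ card W"
proof -
  let ?V = "{a::bool list. length a = k \<and> (\<forall>j<k. j \<notin> W \<longrightarrow> a!j = b j)}"
  have fW: "finite W" using assms finite_subset by blast
  show fV: "finite ?V"
    by (rule finite_subset[of _ "{xs. set xs \<subseteq> UNIV \<and> length xs = k}"]) (auto intro: finite_lists_length_eq[of "UNIV::bool set" k, simplified])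
  have inj: "inj_on (\<lambda>a. {j\<in>W. a!j}) ?V"
  proof (rule inj_onI)
    fix a a' assume a: "a \<in> ?V" and a': "a' \<in> ?V" and eq: "{j\<in>W. a!j} = {j\<in>W. a'!j}"
    show "a = a'"
    proof (rule nth_equalityI)
      show "length a = length a'" using a a' by simp
      fix j assume j: "j < length a"
      show "a!j = a'!j"
      proof (cases "j \<in> W")
        case True then show ?thesis using eq by blast
      next
        case False then show ?thesis using a a' j by auto
      qed
    qed
  qed
  have "card ?V = card ((\<lambda>a. {j\<in>W. a!j}) ` ?V)" using inj by (simp add: card_image)
  also have "\<dots> \<le> card (Pow W)" by (rule card_mono) (auto simp: fW)
  also have "\<dots> = 2 ^ card W" using fW by (simp add: card_Pow)
  finally show "card ?V \<le> 2 ^ card W" .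
qed

lemma core:
  assumes d1: "1 \<le> d" and dn: "d \<le> n" and R0: "0 < R"
  shows "real (card {I \<in> subs n d. detects l I (D (test_answers T I))})
     \<le> real (length T) * real (n choose d) / real R
       + 2 ^ card (win n R d T) * (real (n choose d) * (real d / real n) ^ l)"
proof -
  define W where "W = win n R d T"
  define b where "b = (\<lambda>j. n * R \<le> qj n T j * d)"
  define S where "S = subs n d"
  define V where "V = {a::bool list. length a = length T \<and> (\<forall>j<length T. j \<notin> W \<longrightarrow> a!j = b j)}"
  define G where "G = {I\<in>S. \<forall>j<length T. j \<notin> W \<longrightarrow> (T!j \<inter> I \<noteq> {}) = b j}"
  define Bad where "Bad = (\<lambda>j. {I\<in>S. (T!j \<inter> I \<noteq> {}) \<noteq> b j})"
  define J where "J = {j. j < length T \<and> j \<notin> W}"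
  define A where "A = (\<lambda>L. {I\<in>S. L \<subseteq> I \<and> card L = l})"
  have WT: "W \<subseteq> {..<length T}" by (auto simp: W_def win_def)
  have fV: "finite V" and cV: "card V \<le> 2 ^ card W" unfolding V_def using card_V_le[OF WT] by auto
  have fS: "finite S" by (simp add: S_def)
  have fJ: "finite J" by (simp add: J_def)
  have sub1: "{I \<in> S. detects l I (D (test_answers T I))} \<subseteq> (\<Union>j\<in>J. Bad j) \<union> (\<Union>L\<in>D ` V. A L)"
  proof
    fix I assume I: "I \<in> {I \<in> S. detects l I (D (test_answers T I))}"
    have IS: "I \<in> S" and det: "detects l I (D (test_answers T I))" using I by simp_all
    show "I \<in> (\<Union>j\<in>J. Bad j) \<union> (\<Union>L\<in>D ` V. A L)"
    proof (cases "\<forall>j<length T. j \<notin> W \<longrightarrow> (T!j \<inter> I \<noteq> {}) = b j")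
      case True
      hence "test_answers T I \<in> V" unfolding V_def test_answers_def by simp
      moreover have "I \<in> A (D (test_answers T I))" using IS det unfolding A_def detects_def by simp
      ultimately show ?thesis by (rule UnI2[OF UN_I[OF imageI]])
    next
      case False
      then obtain j where j: "j < length T" "j \<notin> W" "(T!j \<inter> I \<noteq> {}) \<noteq> b j" by auto
      hence "I \<in> Bad j" using IS unfolding Bad_def by simp
      moreover have "j \<in> J" using j unfolding J_def by simp
      ultimately show ?thesis by (rule UnI1[OF UN_I, rotated])
    qed
  qed
  have fin_rhs: "finite ((\<Union>j\<in>J. Bad j) \<union> (\<Union>L\<in>D ` V. A L))"
    by (rule finite_subset[OF _ fS]) (auto simp: Bad_def A_def)
  have bad_le: "real R * real (card (Bad j)) \<le> real (n choose d)" if j: "j \<in> J" for j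
  proof (cases "b j")
    case True
    have "Bad j = {I \<in> subs n d. T!j \<inter> I = {}}" using True by (auto simp: Bad_def S_def)
    moreover have "n * R \<le> card (T!j \<inter> {..<n}) * d" using True by (simp add: b_def qj_def)
    ultimately show ?thesis using frac_big[OF d1 dn _ R0] by simp
  next
    case False
    have "Bad j = {I \<in> subs n d. T!j \<inter> I \<noteq> {}}" using False by (auto simp: Bad_def S_def)
    moreover have "R * card (T!j \<inter> {..<n}) * d \<le> n"
    proof -
      have "j < length T" "j \<notin> win n R d T" using j by (auto simp: J_def W_def)
      hence "\<not> (n < R * qj n T j * d \<and> qj n T j * d < n * R)" unfolding win_def by blast
      moreover have "qj n T j * d < n * R" using False unfolding b_def by simp
      ultimately show ?thesis unfolding qj_def by simp
    qed
    ultimately show ?thesis using frac_small[OF d1 dn] by simp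
  qed
  have A_le: "real (card (A L)) \<le> real (n choose d) * (real d / real n) ^ l" for L
  proof (cases "card L = l")
    case True
    have np: "real n > 0" using d1 dn by simp
    have "A L = {I \<in> subs n d. L \<subseteq> I}" using True by (auto simp: A_def S_def)
    hence "real (card (A L)) * real n ^ l \<le> real (n choose d) * real d ^ l"
      using frac_sup[OF True dn] by simp
    hence "real (card (A L)) \<le> real (n choose d) * real d ^ l / real n ^ l"
      using np by (simp add: pos_le_divide_eq)
    thus ?thesis by (simp add: power_divide)
  next
    case False
    hence "A L = {}" by (auto simp: A_def)
    thus ?thesis by simp
  qed
  have "card {I \<in> S. detects l I (D (test_answers T I))} \<le> card ((\<Union>j\<in>J. Bad j) \<union> (\<Union>L\<in>D ` V. A L))"
    by (rule card_mono[OF fin_rhs sub1])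
  also have "\<dots> \<le> card (\<Union>j\<in>J. Bad j) + card (\<Union>L\<in>D ` V. A L)" by (rule card_Un_le)
  also have "\<dots> \<le> (\<Sum>j\<in>J. card (Bad j)) + (\<Sum>L\<in>D ` V. card (A L))"
    by (intro add_mono card_UN_le fJ finite_imageI fV)
  finally have c0: "card {I \<in> S. detects l I (D (test_answers T I))}
      \<le> (\<Sum>j\<in>J. card (Bad j)) + (\<Sum>L\<in>D ` V. card (A L))" .
  hence "real (card {I \<in> S. detects l I (D (test_answers T I))})
      \<le> real ((\<Sum>j\<in>J. card (Bad j)) + (\<Sum>L\<in>D ` V. card (A L)))" by (simp only: of_nat_le_iff)
  hence c1: "real (card {I \<in> S. detects l I (D (test_answers T I))})
      \<le> (\<Sum>j\<in>J. real (card (Bad j))) + (\<Sum>L\<in>D ` V. real (card (A L)))"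
    by (simp only: of_nat_add of_nat_sum)
  have s1: "(\<Sum>j\<in>J. real (card (Bad j))) \<le> real (length T) * real (n choose d) / real R"
  proof -
    have "(\<Sum>j\<in>J. real (card (Bad j))) \<le> (\<Sum>j\<in>J. real (n choose d) / real R)"
    proof (rule sum_mono)
      fix j assume "j \<in> J"
      hence "real (card (Bad j)) * real R \<le> real (n choose d)" using bad_le by (simp add: mult.commute)
      thus "real (card (Bad j)) \<le> real (n choose d) / real R" using R0 by (simp add: pos_le_divide_eq)
    qed
    also have "\<dots> = real (card J) * (real (n choose d) / real R)" by simp
    also have "\<dots> \<le> real (length T) * (real (n choose d) / real R)"
    proof (rule mult_right_mono)
      have "J \<subseteq> {..<length T}" by (auto simp: J_def)
      hence "card J \<le> length T" using card_mono[of "{..<length T}" J] by simp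
      thus "real (card J) \<le> real (length T)" by simp
    qed simp
    finally show ?thesis by simp
  qed
  have s2: "(\<Sum>L\<in>D ` V. real (card (A L))) \<le> 2 ^ card W * (real (n choose d) * (real d / real n) ^ l)"
  proof -
    have "(\<Sum>L\<in>D ` V. real (card (A L))) \<le> (\<Sum>L\<in>D ` V. real (n choose d) * (real d / real n) ^ l)"
      by (intro sum_mono A_le)
    also have "\<dots> = real (card (D ` V)) * (real (n choose d) * (real d / real n) ^ l)" by simp
    also have "\<dots> \<le> 2 ^ card W * (real (n choose d) * (real d / real n) ^ l)"
    proof (rule mult_right_mono)
      have "card (D ` V) \<le> 2 ^ card W" using card_image_le[OF fV, of D] cV by linarith
      hence "real (card (D ` V)) \<le> real (2 ^ card W)" by (simp only: of_nat_le_iff)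
      thus "real (card (D ` V)) \<le> 2 ^ card W" by simp
    qed simp
    finally show ?thesis .
  qed
  show ?thesis using c1 s1 s2 unfolding S_def W_def by linarith
qed



lemma win_disj:
  assumes "R * R * d1 \<le> d2" "0 < R"
  shows "win n R d1 T \<inter> win n R d2 T = {}"
proof (rule ccontr)
  assume "win n R d1 T \<inter> win n R d2 T \<noteq> {}"
  then obtain j where j1: "n < R * qj n T j * d1" and j2: "qj n T j * d2 < n * R"
    unfolding win_def by blast
  define q where "q = qj n T j"
  have "n * R < R * q * d1 * R" using j1 assms(2) unfolding q_def by simp
  also have "\<dots> = q * (R * R * d1)" by (simp only: mult_ac)
  also have "\<dots> \<le> q * d2" using assms(1) by (rule mult_le_mono2)
  finally show False using j2 unfolding q_def by simp
qed

lemma det_avg: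
  fixes d :: "nat \<Rightarrow> nat"
  assumes k1: "1 \<le> k" and R0: "0 < R" and dd: "\<forall>i<k. 1 \<le> d i \<and> d i \<le> n"
    and sep: "\<forall>i i'. i < i' \<longrightarrow> i' < k \<longrightarrow> R * R * d i \<le> d i'"
    and Tm: "length T \<le> m" and mR: "16 * m \<le> R"
    and small: "\<forall>i<k. 2 powr (2 * real m / real k) * (real (d i) / real n) ^ l \<le> 1/16"
  shows "(\<Sum>i<k. real (card {I\<in>subs n (d i). detects l I (D (test_answers T I))}) / real (n choose d i))
          \<le> 5/8 * real k"
proof -
  define f where "f = (\<lambda>i. real (card {I\<in>subs n (d i). detects l I (D (test_answers T I))}) / real (n choose d i))"
  define w where "w = (\<lambda>i. card (win n R (d i) T))"
  have Cpos: "real (n choose d i) > 0" if "i < k" for i using dd that by simp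
  have f1: "f i \<le> 1" if i: "i < k" for i
  proof -
    have "card {I\<in>subs n (d i). detects l I (D (test_answers T I))} \<le> card (subs n (d i))"
      by (rule card_mono) auto
    hence "real (card {I\<in>subs n (d i). detects l I (D (test_answers T I))}) \<le> real (n choose d i)"
      by (simp add: card_subs)
    thus ?thesis unfolding f_def using Cpos[OF i] by simp
  qed
  have f0: "0 \<le> f i" for i unfolding f_def by simp
  have f2: "f i \<le> 1/16 + 2 ^ w i * (real (d i) / real n) ^ l" if i: "i < k" for i
  proof -
    let ?C = "real (n choose d i)"
    have c: "real (card {I\<in>subs n (d i). detects l I (D (test_answers T I))})
       \<le> real (length T) * ?C / real R + 2 ^ w i * (?C * (real (d i) / real n) ^ l)"
      unfolding w_def using core[of "d i" n R l D T] dd i R0 by simp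
    have "f i \<le> (real (length T) * ?C / real R + 2 ^ w i * (?C * (real (d i) / real n) ^ l)) / ?C"
      unfolding f_def by (rule divide_right_mono[OF c]) (use Cpos[OF i] in simp)
    also have "\<dots> = real (length T) / real R + 2 ^ w i * (real (d i) / real n) ^ l"
      using Cpos[OF i] by (simp add: field_simps)
    also have "real (length T) / real R \<le> 1/16"
    proof -
      have "16 * real (length T) \<le> real R" using Tm mR by linarith
      thus ?thesis using R0 by (simp add: divide_le_eq)
    qed
    finally show ?thesis by simp
  qed
  have disj: "win n R (d i) T \<inter> win n R (d i') T = {}" if "i < k" "i' < k" "i \<noteq> i'" for i i'
  proof (cases "i < i'")
    case True then show ?thesis using win_disj[of R "d i" "d i'" n T] sep that R0 by blast
  next
    case False
    hence "i' < i" using that by simp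
    then show ?thesis using win_disj[of R "d i'" "d i" n T] sep that R0 by blast
  qed
  have sumw: "(\<Sum>i<k. w i) \<le> m"
  proof -
    have "(\<Sum>i<k. w i) = card (\<Union>i<k. win n R (d i) T)"
      unfolding w_def
    proof (rule card_UN_disjoint[symmetric])
      show "finite {..<k}" by simp
      show "\<forall>i\<in>{..<k}. finite (win n R (d i) T)"
        by (auto intro: finite_subset[of _ "{..<length T}"] simp: win_def)
      show "\<forall>i\<in>{..<k}. \<forall>j\<in>{..<k}. i \<noteq> j \<longrightarrow> win n R (d i) T \<inter> win n R (d j) T = {}"
        by (intro ballI impI disj) auto
    qed
    also have "\<dots> \<le> card {..<length T}" by (rule card_mono) (auto simp: win_def)
    finally show ?thesis using Tm by simp
  qed
  define B where "B = {i. i < k \<and> real (w i) > 2 * real m / real k}"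
  have Bsub: "B \<subseteq> {..<k}" by (auto simp: B_def)
  have good: "f i \<le> 1/8" if "i < k" "i \<notin> B" for i
  proof -
    have "real (w i) \<le> 2 * real m / real k" using that by (auto simp: B_def)
    hence "(2::real) ^ w i \<le> 2 powr (2 * real m / real k)"
      by (simp add: powr_realpow[symmetric])
    hence "2 ^ w i * (real (d i) / real n) ^ l \<le> 2 powr (2 * real m / real k) * (real (d i) / real n) ^ l"
      by (rule mult_right_mono) simp
    thus ?thesis using f2[OF that(1)] small that(1) by fastforce
  qed
  have cardB: "real (card B) \<le> real k / 2"
  proof (cases "B = {}")
    case True then show ?thesis by simp
  next
    case False
    then obtain i0 where i0: "i0 \<in> B" by blast
    have kpos: "real k > 0" using k1 by simp
    have "real (w i0) > 0" using i0 kpos unfolding B_def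
      by (smt (verit, best) divide_nonneg_pos mem_Collect_eq of_nat_0_le_iff)
    hence "w i0 \<le> (\<Sum>i<k. w i)" using i0 Bsub by (intro member_le_sum) auto
    hence mpos: "real m \<ge> 1" using sumw \<open>real (w i0) > 0\<close> by simp
    have "real (card B) * (2 * real m / real k) = (\<Sum>i\<in>B. 2 * real m / real k)" by simp
    also have "\<dots> \<le> (\<Sum>i\<in>B. real (w i))" by (rule sum_mono) (auto simp: B_def)
    also have "\<dots> \<le> (\<Sum>i<k. real (w i))" using Bsub by (intro sum_mono2) auto
    also have "\<dots> = real (\<Sum>i<k. w i)" by simp
    also have "\<dots> \<le> real m" using sumw by (simp only: of_nat_le_iff)
    finally have "real (card B) * (2 * real m / real k) \<le> real m" .
    hence "real (card B) * 2 * real m \<le> real m * real k" using kpos by (simp add: field_simps)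
    thus ?thesis using mpos by (simp add: field_simps)
  qed
  have "(\<Sum>i<k. f i) = (\<Sum>i\<in>B. f i) + (\<Sum>i\<in>{..<k} - B. f i)"
    using Bsub by (simp add: sum.subset_diff)
  also have "\<dots> \<le> (\<Sum>i\<in>B. 1) + (\<Sum>i\<in>{..<k} - B. 1/8)"
    using Bsub by (intro add_mono sum_mono f1 good) auto
  also have "\<dots> = real (card B) + real (k - card B) / 8"
    using Bsub finite_subset[OF Bsub] by (simp add: card_Diff_subset)
  also have "real (k - card B) = real k - real (card B)"
    using card_mono[OF _ Bsub] by (simp add: of_nat_diff)
  finally have "(\<Sum>i<k. f i) \<le> real (card B) + (real k - real (card B)) / 8" .
  moreover have "real (card B) + (real k - real (card B)) / 8 \<le> 5/8 * real k" using cardB of_nat_0_le_iff[of k, where 'a=real] by (simp add: field_simps)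
  ultimately have "(\<Sum>i<k. f i) \<le> 5/8 * real k" by (rule order_trans)
  thus ?thesis unfolding f_def .
qed



lemma ind_sum_card:
  assumes "finite S"
  shows "(\<Sum>I\<in>S. indicator {x. P I x} x :: real) = real (card {I\<in>S. P I x})"
proof -
  have "(\<Sum>I\<in>S. indicator {x. P I x} x :: real) = (\<Sum>I\<in>{I\<in>S. P I x}. 1)"
    using assms by (simp add: indicator_def sum.If_cases Int_def)
  thus ?thesis by simp
qed

lemma yao:
  fixes d :: "nat \<Rightarrow> nat" and A :: "(nat set list \<times> (bool list \<Rightarrow> nat set)) pmf"
  assumes rnd: "randomized_nonadaptive_detects n l m A"
    and k1: "1 \<le> k" and dd: "\<forall>i<k. l \<le> d i \<and> d i \<le> n"
    and det: "\<forall>T D. length T \<le> m \<longrightarrow>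
       (\<Sum>i<k. real (card {I\<in>subs n (d i). detects l I (D (test_answers T I))}) / real (n choose d i)) \<le> 5/8 * real k"
  shows False
proof -
  define E where "E = (\<lambda>I. {x::(nat set list \<times> (bool list \<Rightarrow> nat set)). detects l I (snd x (test_answers (fst x) I))})"
  define g where "g = (\<lambda>x. \<Sum>i<k. (\<Sum>I\<in>subs n (d i). indicator (E I) x) / real (n choose d i))"
  have Cpos: "real (n choose d i) > 0" if "i < k" for i using dd that by simp
  have pr: "measure_pmf.prob A (E I) \<ge> 3/4" if "I \<in> subs n (d i)" "i < k" for I i
  proof -
    have "I \<subseteq> {..<n}" "card I \<ge> l" using that dd by (auto simp: subs_def)
    hence "measure_pmf.prob A {(T, D). detects l I (D (test_answers T I))} \<ge> 3/4"
      using rnd unfolding randomized_nonadaptive_detects_def by blast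
    moreover have "{(T, D). detects l I (D (test_answers T I))} = E I" by (auto simp: E_def)
    ultimately show ?thesis by simp
  qed
  have intI: "integrable (measure_pmf A) (indicator (E I) :: _ \<Rightarrow> real)" for I
    by (rule integrable_real_indicator) (simp_all add: top.not_eq_extremum[symmetric] less_top[symmetric])
  have intg: "integrable (measure_pmf A) g"
    unfolding g_def
  proof (rule Bochner_Integration.integrable_sum)
    fix i
    show "integrable (measure_pmf A) (\<lambda>x. (\<Sum>I\<in>subs n (d i). indicator (E I) x) / real (n choose d i))"
      by (rule integrable_divide_zero, rule Bochner_Integration.integrable_sum, rule intI)
  qed
  have "(LINT x|measure_pmf A. g x) = (\<Sum>i<k. (\<Sum>I\<in>subs n (d i). measure_pmf.prob A (E I)) / real (n choose d i))"
    unfolding g_def by (simp add: Bochner_Integration.integral_sum intI)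
  also have "\<dots> \<ge> (\<Sum>i<k. (\<Sum>I\<in>subs n (d i). 3/4) / real (n choose d i))"
    by (intro sum_mono divide_right_mono pr) auto
  also have "(\<Sum>i<k. (\<Sum>I\<in>subs n (d i). (3/4::real)) / real (n choose d i)) = (\<Sum>i<k. 3/4)"
    by (intro sum.cong refl) (use Cpos in \<open>simp add: card_subs not_less\<close>)
  finally have lo: "(LINT x|measure_pmf A. g x) \<ge> 3/4 * real k" by simp
  have "(LINT x|measure_pmf A. g x) \<le> (LINT x|measure_pmf A. 5/8 * real k)"
  proof (rule integral_mono_AE[OF intg])
    show "integrable (measure_pmf A) (\<lambda>x. 5/8 * real k)" by simp
    show "AE x in measure_pmf A. g x \<le> 5/8 * real k"
    proof (rule AE_pmfI)
      fix x assume x: "x \<in> set_pmf A"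
      obtain T D where xTD: "x = (T, D)" by (cases x)
      have "length T \<le> m" using rnd x xTD unfolding randomized_nonadaptive_detects_def by auto
      hence le: "(\<Sum>i<k. real (card {I\<in>subs n (d i). detects l I (D (test_answers T I))}) / real (n choose d i)) \<le> 5/8 * real k"
        using det by blast
      have "g x = (\<Sum>i<k. real (card {I\<in>subs n (d i). detects l I (D (test_answers T I))}) / real (n choose d i))"
        unfolding g_def E_def xTD using ind_sum_card[OF subs_finite, of "\<lambda>I x. detects l I (snd x (test_answers (fst x) I))"]
        by simp
      thus "g x \<le> 5/8 * real k" using le by simp
    qed
  qed
  hence "(LINT x|measure_pmf A. g x) \<le> 5/8 * real k" by simp
  with lo k1 show False by simp
qed



lemma main_contra:
  fixes a :: real
  assumes a0: "0 < a" and a1: "a \<le> 1/2" and an: "8 \<le> a * log 2 (real n)"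
    and l1: "1 \<le> l" and lc: "real l \<le> real n powr (1 - 2*a)"
    and rnd: "randomized_nonadaptive_detects n l m A"
    and mlt: "real m < a^2/56 * real l * (log 2 (real n))^2 / (log 2 (real l) + log 2 (log 2 (real n)))"
  shows False
proof -
  define L2 where "L2 = log 2 (real n)"
  have L2_16: "L2 \<ge> 16"
  proof -
    have "8 \<le> a * L2" using an by (simp add: L2_def)
    also have "\<dots> \<le> (1/2) * L2"
    proof (rule mult_right_mono[OF a1])
      show "0 \<le> L2"
      proof (rule ccontr)
        assume "\<not> 0 \<le> L2"
        hence "a * L2 < 0" using a0 by (simp add: mult_pos_neg)
        thus False using \<open>8 \<le> a * L2\<close> by simp
      qed
    qed
    finally show ?thesis by simp
  qed
  have n1: "real n > 1"
  proof (rule ccontr)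
    assume "\<not> real n > 1"
    hence "n = 0 \<or> n = 1" by linarith
    hence "L2 \<le> 0" unfolding L2_def by (auto simp: log_def)
    thus False using L2_16 by simp
  qed
  have npos: "real n > 0" using n1 by simp
  have n_eq: "real n = 2 powr L2" unfolding L2_def using npos by simp
  define Lam where "Lam = log 2 (real l) + log 2 L2"
  have logl0: "log 2 (real l) \<ge> 0" using l1 by simp
  have logL2: "log 2 L2 \<ge> 4"
  proof -
    have "log 2 (16::real) = 4"
      using log_pow_cancel[of 2 4] by simp
    moreover have "log 2 (16::real) \<le> log 2 L2" using L2_16 by simp
    ultimately show ?thesis by simp
  qed
  have Lam4: "Lam \<ge> 4" using logl0 logL2 by (simp add: Lam_def)
  have mlt': "real m * Lam < a^2/56 * real l * L2^2"
    using mlt Lam4 unfolding Lam_def[symmetric] L2_def[symmetric] by (simp add: pos_less_divide_eq)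
  define R where "R = 16 * (m + 1)"
  have R16: "real R \<ge> 16" by (simp add: R_def)
  have logR: "log 2 (real R) = 4 + log 2 (real m + 1)"
  proof -
    have "real R = 16 * (real m + 1)" unfolding R_def by simp
    hence "log 2 (real R) = log 2 16 + log 2 (real m + 1)"
      using log_mult_pos[of 16 "real m + 1" 2] by (simp only:)
    moreover have "log 2 (16::real) = 4"
      using log_pow_cancel[of 2 4] by simp
    ultimately show ?thesis by simp
  qed
  have m1le: "real m + 1 \<le> real l * L2^2"
  proof -
    have "a^2 \<le> (1/2)^2" using a0 a1 by (intro power_mono) auto
    hence a2: "a^2 \<le> 1/4" by (simp add: power2_eq_square)
    have "(16::real)^2 \<le> L2^2" using L2_16 by (intro power_mono) auto
    hence L2sq: "256 \<le> L2^2" by simp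
    have "1 * L2^2 \<le> real l * L2^2" using l1 by (intro mult_right_mono) auto
    hence lL: "real l * L2^2 \<ge> 256" using L2sq by simp
    have "real m * 4 \<le> real m * Lam" using Lam4 by (intro mult_left_mono) auto
    also have "\<dots> < a^2/56 * real l * L2^2" by (rule mlt')
    also have "\<dots> = (a^2/56) * (real l * L2^2)" by (simp only: mult.assoc)
    also have "\<dots> \<le> (1/4/56) * (real l * L2^2)" using a2 lL by (intro mult_right_mono) auto
    finally show ?thesis using lL by linarith
  qed
  have logR3: "log 2 (real R) \<le> 3 * Lam"
  proof -
    have "log 2 (real m + 1) \<le> log 2 (real l * L2^2)" using m1le by simp
    also have "\<dots> = log 2 (real l) + 2 * log 2 L2" using l1 L2_16 by (simp add: log_mult log_nat_power)
    finally show ?thesis using logR logL2 logl0 by (simp add: Lam_def)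
  qed
  have logRpos: "log 2 (real R) \<ge> 4" using logR by simp
  define x where "x = a * L2 / (2 * log 2 (real R))"
  have x0: "x \<ge> 0" using a0 L2_16 logRpos by (simp add: x_def)
  define k where "k = nat \<lfloor>x\<rfloor> + 1"
  have k1: "1 \<le> k" by (simp add: k_def)
  have kx: "real k > x" unfolding k_def using x0 by linarith
  define d where "d = (\<lambda>i. l * R ^ (2 * i))"
  have Rpow: "real (R ^ (2*i)) \<le> real n powr a" if "i < k" for i
  proof -
    have ix: "real i \<le> x" using that x0 unfolding k_def by linarith
    have "log 2 (real (R ^ (2*i))) = real (2*i) * log 2 (real R)" using R16 by (simp add: log_nat_power)
    also have "\<dots> \<le> 2 * x * log 2 (real R)" using ix logRpos by (simp add: mult_right_mono)
    also have "\<dots> = a * L2" unfolding x_def using logRpos by simp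
    also have "\<dots> = log 2 (real n powr a)" unfolding L2_def using npos by (simp add: log_powr)
    finally show ?thesis using R16 npos by (simp add: less_imp_le)
  qed
  have dle: "real (d i) \<le> real n powr (1 - a)" if "i < k" for i
  proof -
    have "real (d i) = real l * real (R ^ (2*i))" by (simp add: d_def)
    also have "\<dots> \<le> real n powr (1 - 2*a) * real n powr a" using lc Rpow[OF that] by (intro mult_mono) auto
    also have "\<dots> = real n powr (1 - a)" by (simp add: powr_add[symmetric])
    finally show ?thesis .
  qed
  have dd: "\<forall>i<k. l \<le> d i \<and> d i \<le> n"
  proof (intro allI impI conjI)
    fix i assume i: "i < k"
    show "l \<le> d i" unfolding d_def using R16 by simp
    have "real (d i) \<le> real n powr (1 - a)" by (rule dle[OF i])
    also have "\<dots> \<le> real n powr 1" using n1 a0 by (intro powr_mono) auto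
    finally show "d i \<le> n" using npos by simp
  qed
  have sep: "\<forall>i i'. i < i' \<longrightarrow> i' < k \<longrightarrow> R * R * d i \<le> d i'"
  proof (intro allI impI)
    fix i i' :: nat assume "i < i'" "i' < k"
    have "R * R * R ^ (2*i) = R ^ (2*i + 2)" by (simp add: power_add power2_eq_square)
    also have "\<dots> \<le> R ^ (2*i')" using R16 \<open>i < i'\<close> by (intro power_increasing) auto
    finally show "R * R * d i \<le> d i'" unfolding d_def by (simp add: mult.left_commute)
  qed
  have K5: "2 * real m / real k \<le> a * real l * L2 - 4"
  proof (cases "m = 0")
    case True
    have "8 \<le> a * L2" using an by (simp add: L2_def)
    moreover have "a * L2 \<le> a * real l * L2" using l1 a0 L2_16 by (simp add: mult_right_mono mult.commute)
    ultimately show ?thesis using True by simp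
  next
    case False
    have xpos: "x > 0" unfolding x_def using a0 L2_16 logRpos by simp
    have "2 * real m / real k \<le> 2 * real m / x" using False xpos kx by (intro divide_left_mono) auto
    also have "\<dots> = 4 * real m * log 2 (real R) / (a * L2)" unfolding x_def using a0 L2_16 logRpos by (simp add: field_simps)
    also have "\<dots> \<le> a * real l * L2 - 4"
    proof -
      have "real m * log 2 (real R) \<le> real m * (3 * Lam)" by (rule mult_left_mono[OF logR3]) simp
      hence "4 * real m * log 2 (real R) \<le> 12 * (real m * Lam)" by linarith
      also have "\<dots> \<le> 12 * (a^2/56 * real l * L2^2)" using mlt' by linarith
      also have "\<dots> \<le> a * L2 * (a * real l * L2 - 4)"
      proof -
        have "8 \<le> a * L2" using an by (simp add: L2_def)
        hence y1: "(a * L2) * 8 \<le> (a * L2) * (a * L2)" by (intro mult_left_mono) auto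
        have "(44/56) * (a * L2) * (a * L2) * 1 \<le> (44/56) * (a * L2) * (a * L2) * real l"
          using l1 \<open>8 \<le> a * L2\<close> by (intro mult_left_mono) auto
        hence "4 * (a * L2) \<le> (44/56) * (a * L2) * (a * L2) * real l" using y1 \<open>8 \<le> a * L2\<close> by linarith
        thus ?thesis by (simp add: power2_eq_square algebra_simps)
      qed
      finally show ?thesis using a0 L2_16 by (simp add: pos_divide_le_eq mult.commute)
    qed
    finally show ?thesis .
  qed
  have small: "\<forall>i<k. 2 powr (2 * real m / real k) * (real (d i) / real n) ^ l \<le> 1/16"
  proof (intro allI impI)
    fix i assume i: "i < k"
    have "real (d i) / real n \<le> real n powr (1 - a) / real n" using dle[OF i] npos by (simp add: divide_right_mono)
    also have "\<dots> = real n powr (- a)" using npos by (simp add: powr_diff powr_minus_divide)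
    finally have "(real (d i) / real n) ^ l \<le> (real n powr (- a)) ^ l" by (intro power_mono) auto
    also have "\<dots> = real n powr (- a * real l)" using npos by (simp add: powr_realpow[symmetric] powr_powr)
    also have "\<dots> = 2 powr (- a * real l * L2)" unfolding n_eq by (simp add: powr_powr mult.commute)
    finally have e1: "(real (d i) / real n) ^ l \<le> 2 powr (- a * real l * L2)" .
    have "2 powr (2 * real m / real k) * (real (d i) / real n) ^ l \<le> 2 powr (2 * real m / real k) * 2 powr (- a * real l * L2)"
      using e1 by (intro mult_left_mono) auto
    also have "\<dots> = 2 powr (2 * real m / real k - a * real l * L2)" by (simp add: powr_add[symmetric])
    also have "\<dots> \<le> 2 powr (-4)" using K5 by (intro powr_mono) auto
    also have "\<dots> = 1/16" by (simp add: powr_minus_divide)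
    finally show "2 powr (2 * real m / real k) * (real (d i) / real n) ^ l \<le> 1/16" .
  qed
  have dd1: "\<forall>i<k. 1 \<le> d i \<and> d i \<le> n" using dd l1 by auto
  have det: "\<forall>T D. length T \<le> m \<longrightarrow>
       (\<Sum>i<k. real (card {I\<in>subs n (d i). detects l I (D (test_answers T I))}) / real (n choose d i)) \<le> 5/8 * real k"
    using det_avg[OF k1 _ dd1 sep _ _ small] R16 by (simp add: R_def)
  show False by (rule yao[OF rnd k1 dd det])
qed



theorem theorem14:
  fixes c :: real
  assumes "c < 1"
  shows "\<exists>C > 0. \<exists>N. \<forall>n \<ge> N. \<forall>l m A.
           1 \<le> l \<longrightarrow> real l \<le> real n powr c \<longrightarrow>
           randomized_nonadaptive_detects n l m A \<longrightarrow>
           real m \<ge> C * real l * (log 2 (real n))\<^sup>2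
                      / (log 2 (real l) + log 2 (log 2 (real n)))"
proof -
  define c' where "c' = max c 0"
  define a where "a = (1 - c') / 2"
  have a0: "0 < a" using assms by (simp add: a_def c'_def)
  have a1: "a \<le> 1/2" by (simp add: a_def c'_def)
  have ca: "1 - 2*a = c'" by (simp add: a_def field_simps)
  define N where "N = nat \<lceil>2 powr (8/a)\<rceil>"
  show ?thesis
  proof (intro exI[of _ "a^2/56"] conjI exI[of _ N] allI impI)
    show "0 < a^2/56" using a0 by simp
    fix n l m A
    assume nN: "N \<le> n" and l1: "1 \<le> l" and lc: "real l \<le> real n powr c"
      and rnd: "randomized_nonadaptive_detects n l m A"
    have nge: "real n \<ge> 2 powr (8/a)"
    proof -
      have "2 powr (8/a) \<le> real N" unfolding N_def by linarith
      also have "\<dots> \<le> real n" using nN by simp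
      finally show ?thesis .
    qed
    have npos: "real n > 0" using nge by (smt (verit) powr_gt_zero)
    have "8/a \<le> log 2 (real n)" using nge npos le_log_iff[of 2 "real n" "8/a"] by simp
    hence an: "8 \<le> a * log 2 (real n)" using a0 by (simp add: field_simps)
    have n1: "real n \<ge> 1" using npos by simp
    have lc': "real l \<le> real n powr (1 - 2*a)"
    proof -
      have "real n powr c \<le> real n powr c'" using n1 by (intro powr_mono) (auto simp: c'_def)
      thus ?thesis using lc ca by simp
    qed
    show "a^2/56 * real l * (log 2 (real n))\<^sup>2 / (log 2 (real l) + log 2 (log 2 (real n))) \<le> real m"
    proof (rule ccontr)
      assume "\<not> ?thesis"
      hence "real m < a^2/56 * real l * (log 2 (real n))\<^sup>2 / (log 2 (real l) + log 2 (log 2 (real n)))"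
        by simp
      thus False using main_contra[OF a0 a1 an l1 lc' rnd] by blast
    qed
  qed
qed

end
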